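(* Let $X$ and $Y$ be metric spaces and let $f:X\to Y$ be a local homeomorphism. Suppose that $Y$ is $\mathcal P$-connected and locally $\mathcal P$-contractible for some family $\mathcal P$ of paths in $Y$. Then $f$ is a covering projection if and only if $f$ has the continuation property for every path in $\mathcal P$.
   Context: A family $\mathcal P$ of continuous paths $p:[0,1]\to Y$ in a metric space $Y$ is given. $Y$ is $\mathcal P$-connected if (i) whenever $p\in\mathcal P$, the reverse path $\bar p(t)=p(1-t)$ belongs to $\mathcal P$, and (ii) every two points of $Y$ can be joined by a path in $\mathcal P$. $Y$ is locally $\mathcal P$-contractible if every $y_0\in Y$ has an open neighborhood $U$ with a continuous homotopy $H:U\times[0,1]\to U$ such that $H(y_0,t)=y_0$ for all $t$, $H(y,0)=y_0$ and $H(y,1)=y$ for all $y\in U$, and for every $y\in U$ the path $t\mapsto H(y,t)$ belongs to $\mathcal P$. A continuous map $f:X\to Y$ has the continuation property for a path $p:[0,1]\to Y$ if for every $b\in(0,1]$ and every continuous path $q:[0,b)\to X$ with $f\circ q=p$ on $[0,b)$, there exists a sequence $(t_n)$ in $[0,b)$ converging to $b$ such that $(q(t_n))$ converges in $X$. *)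

theory Defs
  imports "HOL-Analysis.Analysis"
begin

text \<open>Paths are functions real to Y, only their values on [0,1] matter.
  A path p "belongs to" the family P if some member of P agrees with p on [0,1].\<close>
definition in_family :: "(real \<Rightarrow> 'b) set \<Rightarrow> (real \<Rightarrow> 'b) \<Rightarrow> bool" where
  "in_family P p \<longleftrightarrow> (\<exists>p'\<in>P. \<forall>t\<in>{0..1}. p' t = p t)"

definition P_connected :: "(real \<Rightarrow> 'b::topological_space) set \<Rightarrow> bool" where
  "P_connected P \<longleftrightarrow>
     (\<forall>p\<in>P. in_family P (reversepath p)) \<and>
     (\<forall>x y. \<exists>p\<in>P. pathstart p = x \<and> pathfinish p = y)"

definition locally_P_contractible :: "(real \<Rightarrow> 'b::topological_space) set \<Rightarrow> bool" where
  "locally_P_contractible P \<longleftrightarrow>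
     (\<forall>y0. \<exists>U H. open U \<and> y0 \<in> U \<and>
        continuous_on (U \<times> {0..1}) H \<and> H ` (U \<times> {0..1}) \<subseteq> U \<and>
        (\<forall>t\<in>{0..1}. H (y0, t) = y0) \<and>
        (\<forall>y\<in>U. H (y, 0) = y0 \<and> H (y, 1) = y) \<and>
        (\<forall>y\<in>U. in_family P (\<lambda>t. H (y, t))))"

definition local_homeomorphism :: "('a::topological_space \<Rightarrow> 'b::topological_space) \<Rightarrow> bool" where
  "local_homeomorphism f \<longleftrightarrow>
     (\<forall>x. \<exists>U g. open U \<and> x \<in> U \<and> open (f ` U) \<and> homeomorphism U (f ` U) f g)"

definition continuation_property ::
    "('a::metric_space \<Rightarrow> 'b) \<Rightarrow> (real \<Rightarrow> 'b) \<Rightarrow> bool" where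
  "continuation_property f p \<longleftrightarrow>
     (\<forall>b\<in>{0<..1}. \<forall>q::real \<Rightarrow> 'a.
        continuous_on {0..<b} q \<and> (\<forall>t\<in>{0..<b}. f (q t) = p t) \<longrightarrow>
        (\<exists>tn::nat \<Rightarrow> real. (\<forall>n. tn n \<in> {0..<b}) \<and> tn \<longlonglongrightarrow> b \<and>
            convergent (\<lambda>n. q (tn n))))"

end

theory Submission
  imports Defs
begin

lemma lh_open_inj:
  assumes "local_homeomorphism f"
  obtains U g where "open U" "x \<in> U" "open (f ` U)" "homeomorphism U (f ` U) f g"
  using assms unfolding local_homeomorphism_def by blast

lemma lh_cont:
  fixes f :: "'a::metric_space \<Rightarrow> 'b::metric_space"
  assumes "local_homeomorphism f" shows "continuous_on A f"
proof -
  have "isCont f x" for x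
  proof -
    obtain U g where "open U" "x \<in> U" "open (f ` U)" "homeomorphism U (f ` U) f g"
      using lh_open_inj[OF assms] by blast
    then show ?thesis
      by (meson continuous_on_eq_continuous_at homeomorphism_cont1)
  qed
  then show ?thesis by (simp add: continuous_at_imp_continuous_on)
qed

lemma real_induct01:
  fixes S :: "real set"
  assumes S0: "0 \<in> S" and down: "\<And>t s. t \<in> S \<Longrightarrow> 0 \<le> s \<Longrightarrow> s \<le> t \<Longrightarrow> s \<in> S"
    and sub: "S \<subseteq> {0..1}"
    and step: "\<And>\<tau>. 0 \<le> \<tau> \<Longrightarrow> \<tau> \<le> 1 \<Longrightarrow> (\<And>s. 0 \<le> s \<Longrightarrow> s < \<tau> \<Longrightarrow> s \<in> S)
        \<Longrightarrow> \<exists>e>0. \<forall>s. 0 \<le> s \<and> s \<le> 1 \<and> s < \<tau> + e \<longrightarrow> s \<in> S"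
  shows "1 \<in> S"
proof -
  define B where "B = Sup S"
  have bdd: "bdd_above S" using sub by (meson bdd_above_Icc bdd_above_mono)
  have ne: "S \<noteq> {}" using S0 by auto
  have B0: "0 \<le> B" unfolding B_def using S0 bdd by (meson cSup_upper)
  have B1: "B \<le> 1" unfolding B_def using sub ne by (meson atLeastAtMost_iff cSup_least subsetD)
  have below: "s \<in> S" if "0 \<le> s" "s < B" for s
  proof -
    obtain t where "t \<in> S" "s < t" using less_cSup_iff[OF ne bdd, of s] \<open>s < B\<close> B_def by auto
    then show ?thesis using down that by auto
  qed
  obtain e where e: "e > 0" "\<forall>s. 0 \<le> s \<and> s \<le> 1 \<and> s < B + e \<longrightarrow> s \<in> S"
    using step[OF B0 B1 below] by blast
  have "B = 1"
  proof (rule ccontr)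
    assume "B \<noteq> 1"
    then have "B < 1" using B1 by auto
    define s where "s = min 1 (B + e/2)"
    have "s \<in> S" using e B0 \<open>B<1\<close> unfolding s_def by auto
    then have "s \<le> B" unfolding B_def using bdd by (simp add: cSup_upper)
    then show False using \<open>B<1\<close> e unfolding s_def by auto
  qed
  then show ?thesis using e by auto
qed

lemma lift_unique:
  fixes f :: "'a::metric_space \<Rightarrow> 'b::metric_space"
  assumes lh: "local_homeomorphism f" and I: "connected I"
    and c1: "continuous_on I q1" and c2: "continuous_on I q2"
    and ff: "\<And>t. t \<in> I \<Longrightarrow> f (q1 t) = f (q2 t)"
    and a: "a \<in> I" "q1 a = q2 a" and t: "t \<in> I"
  shows "q1 t = q2 t"
proof -
  let ?E = "{t \<in> I. q1 t = q2 t}"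
  have cl: "closedin (top_of_set I) ?E"
  proof -
    have "closedin (top_of_set I) {t \<in> topspace (top_of_set I). q1 t = q2 t}"
      by (rule closedin_continuous_maps_eq[OF Hausdorff_space_euclidean])
        (simp_all only: continuous_map_iff_continuous c1 c2)
    then show ?thesis by simp
  qed
  have op: "openin (top_of_set I) ?E"
    unfolding openin_subopen[of _ ?E]
  proof (intro ballI)
    fix s assume s: "s \<in> ?E"
    obtain U g where U: "open U" "q1 s \<in> U" "open (f ` U)" "homeomorphism U (f ` U) f g"
      using lh_open_inj[OF lh] by blast
    let ?N = "I \<inter> q1 -` U \<inter> q2 -` U"
    have "openin (top_of_set I) (I \<inter> q1 -` U)" "openin (top_of_set I) (I \<inter> q2 -` U)"
      using continuous_openin_preimage_gen[OF c1 U(1)] continuous_openin_preimage_gen[OF c2 U(1)] by auto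
    then have "openin (top_of_set I) ?N"
    proof -
      have "openin (top_of_set I) ((I \<inter> q1 -` U) \<inter> (I \<inter> q2 -` U))"
        using \<open>openin (top_of_set I) (I \<inter> q1 -` U)\<close> \<open>openin (top_of_set I) (I \<inter> q2 -` U)\<close>
        by (rule openin_Int)
      moreover have "(I \<inter> q1 -` U) \<inter> (I \<inter> q2 -` U) = ?N" by blast
      ultimately show ?thesis by simp
    qed
    moreover have "s \<in> ?N" using s U by auto
    moreover have "?N \<subseteq> ?E"
    proof
      fix r assume r: "r \<in> ?N"
      have rI: "r \<in> I" and r1: "q1 r \<in> U" and r2: "q2 r \<in> U" using r by auto
      have "q1 r = g (f (q1 r))" using homeomorphism_apply1[OF U(4) r1] by (rule sym)
      also have "\<dots> = g (f (q2 r))" using ff[OF rI] by (rule arg_cong)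
      also have "\<dots> = q2 r" using homeomorphism_apply1[OF U(4) r2] .
      finally show "r \<in> ?E" using rI by blast
    qed
    ultimately show "\<exists>T. openin (top_of_set I) T \<and> s \<in> T \<and> T \<subseteq> ?E" by blast
  qed
  have "?E = {} \<or> ?E = I"
    using I[unfolded connected_clopen, rule_format, of ?E] op cl by blast
  then have "?E = I" using a by blast
  then show ?thesis using t by auto
qed




lemma path_lift:
  fixes f :: "'a::metric_space \<Rightarrow> 'b::metric_space"
  assumes lh: "local_homeomorphism f" and cp: "continuous_on {0..1} p"
    and cont: "continuation_property f p" and fx: "f x = p 0"
  shows "\<exists>q. continuous_on {0..1} q \<and> (\<forall>t\<in>{0..1}. f (q t) = p t) \<and> q 0 = x"
proof -
  define L where "L b q \<longleftrightarrow> continuous_on {0..b} q \<and> (\<forall>t\<in>{0..b}. f (q t) = p t) \<and> q 0 = x"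
    for b q
  define S where "S = {b. 0 \<le> b \<and> b \<le> 1 \<and> (\<exists>q. L b q)}"
  have fc: "continuous_on A f" for A using lh_cont[OF lh] .
  have loc: "\<exists>e>0. \<exists>V g. open V \<and> xs \<in> V \<and> homeomorphism V (f ` V) f g \<and> open (f ` V) \<and>
      (\<forall>t\<in>{0..1}. \<bar>t - \<tau>\<bar> < e \<longrightarrow> p t \<in> f ` V)"
    if fxs0: "f xs = p \<tau>" and tau0: "\<tau> \<in> {0..1}" for xs \<tau>
  proof -
    obtain V g where V: "open V" "xs \<in> V" "open (f ` V)" "homeomorphism V (f ` V) f g"
      using lh_open_inj[OF lh] by blast
    have "p \<tau> \<in> f ` V" using V(2) fxs0 by (metis imageI)
    then obtain e where e: "e > 0" "ball (p \<tau>) e \<subseteq> f ` V" using V(3) open_contains_ball by blast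
    obtain d where d: "d > 0" "\<forall>t\<in>{0..1}. dist t \<tau> < d \<longrightarrow> dist (p t) (p \<tau>) < e"
      using cp tau0 e(1) unfolding continuous_on_iff by blast
    have "\<forall>t\<in>{0..1}. \<bar>t - \<tau>\<bar> < d \<longrightarrow> p t \<in> f ` V"
      using d e by (auto simp: dist_real_def dist_commute subset_iff)
    then show ?thesis using V d by blast
  qed
  have "1 \<in> S"
  proof (rule real_induct01)
    show "0 \<in> S" unfolding S_def L_def using fx
      by (auto intro!: exI[of _ "\<lambda>_. x"])
    show "s \<in> S" if tS: "t \<in> S" and "0 \<le> s" "s \<le> t" for t s
    proof -
      obtain q where "L t q" "t \<le> 1" using tS unfolding S_def by auto
      then have "L s q" unfolding L_def using that
        by (auto intro: continuous_on_subset)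
      then show ?thesis using that \<open>t \<le> 1\<close> unfolding S_def by auto
    qed
    show "S \<subseteq> {0..1}" unfolding S_def by auto
    fix \<tau> :: real
    assume t0: "0 \<le> \<tau>" "\<tau> \<le> 1" and IH: "\<And>s. 0 \<le> s \<Longrightarrow> s < \<tau> \<Longrightarrow> s \<in> S"
    show "\<exists>e>0. \<forall>s. 0 \<le> s \<and> s \<le> 1 \<and> s < \<tau> + e \<longrightarrow> s \<in> S"
    proof (cases "\<tau> = 0")
      case True
      obtain e V g where eV: "e > 0" "open V" "x \<in> V" "homeomorphism V (f ` V) f g" "open (f ` V)"
        "\<forall>t\<in>{0..1}. \<bar>t - \<tau>\<bar> < e \<longrightarrow> p t \<in> f ` V"
        using loc[of x 0] fx True by auto
      have gc: "continuous_on (f ` V) g" using eV(4) homeomorphism_cont2 by blast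
      have gf: "\<And>y. y \<in> f ` V \<Longrightarrow> f (g y) = y" "\<And>z. z \<in> V \<Longrightarrow> g (f z) = z"
        using homeomorphism_apply2[OF eV(4)] homeomorphism_apply1[OF eV(4)] by auto
      have "s \<in> S" if s: "0 \<le> s" "s \<le> 1" "s < \<tau> + e" for s
      proof -
        have pin: "p t \<in> f ` V" if "t \<in> {0..s}" for t using eV(6) that s True by auto
        have "L s (\<lambda>t. g (p t))" unfolding L_def
        proof (intro conjI ballI)
          have "continuous_on {0..s} p" by (rule continuous_on_subset[OF cp]) (use s in auto)
          then show "continuous_on {0..s} (\<lambda>t. g (p t))"
            by (rule continuous_on_compose2[OF gc]) (use pin in blast)
          show "f (g (p t)) = p t" if "t \<in> {0..s}" for t using gf pin that by auto
          show "g (p 0) = x" using gf(2)[OF eV(3)] fx by simp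
        qed
        then show ?thesis using s unfolding S_def by auto
      qed
      then show ?thesis using eV(1) by blast
    next
      case False
      then have tpos: "\<tau> > 0" using t0 by auto
      have ex: "\<exists>q. L s q" if "0 \<le> s" "s < \<tau>" for s using IH[OF that] unfolding S_def by auto
      define Q where "Q t = (SOME q. L t q) t" for t
      have Qeq: "Q t = q t" if "L s q" "0 \<le> t" "t \<le> s" "s < \<tau>" for s q t
      proof -
        define q0 where "q0 = (SOME q. L t q)"
        have "L t q0" using ex[of t] that unfolding q0_def by (metis someI_ex order.strict_trans1)
        moreover have "L t q" using that unfolding L_def by (auto intro: continuous_on_subset)
        ultimately have "q0 t = q t"
          unfolding L_def using that by (intro lift_unique[OF lh, of "{0..t}" q0 q 0 t]) auto
        then show ?thesis unfolding Q_def q0_def .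
      qed
      have Qcont: "continuous_on {0..<\<tau>} Q"
        unfolding continuous_on_eq_continuous_within
      proof
        fix t assume t: "t \<in> {0..<\<tau>}"
        define s where "s = (t + \<tau>) / 2"
        have s: "0 \<le> s" "s < \<tau>" "t < s" using t unfolding s_def by auto
        obtain q where q: "L s q" using ex s by blast
        have "continuous_on {0..s} q" using q unfolding L_def by blast
        then have "continuous_on {0..s} Q"
          by (rule continuous_on_eq) (use Qeq[OF q] s in auto)
        then have "continuous (at t within {0..s}) Q"
          by (rule continuous_on_imp_continuous_within) (use t s in auto)
        then have "(Q \<longlongrightarrow> Q t) (at t within {0..s})" unfolding continuous_within .
        moreover have "\<forall>\<^sub>F y in at t. (y \<in> {0..s}) = (y \<in> {0..<\<tau>})"
          unfolding eventually_at
          by (rule exI[of _ "s - t"]) (use s in \<open>auto simp: dist_real_def\<close>)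
        ultimately show "continuous (at t within {0..<\<tau>}) Q"
          unfolding continuous_within by (rule Lim_transform_within_set)
      qed
      have Qf: "f (Q t) = p t" if tt: "0 \<le> t" "t < \<tau>" for t
      proof -
        obtain q where q: "L t q" using ex tt by blast
        then show ?thesis using Qeq[OF q] that unfolding L_def by auto
      qed
      have Q0: "Q 0 = x"
      proof -
        obtain q where q: "L 0 q" using ex tpos by blast
        then show ?thesis using Qeq[OF q] tpos unfolding L_def by auto
      qed
      have tau01: "\<tau> \<in> {0<..1}" using tpos t0 by auto
      have QQ: "continuous_on {0..<\<tau>} Q \<and> (\<forall>t\<in>{0..<\<tau>}. f (Q t) = p t)" using Qcont Qf by auto
      obtain tn where tn: "\<forall>n. tn n \<in> {0..<\<tau>}" "tn \<longlonglongrightarrow> \<tau>" "convergent (\<lambda>n. Q (tn n))"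
        using cont[unfolded continuation_property_def, rule_format, OF tau01 QQ] by blast
      then obtain xs where xs: "(\<lambda>n. Q (tn n)) \<longlonglongrightarrow> xs" unfolding convergent_def by blast
      have "(\<lambda>n. f (Q (tn n))) \<longlonglongrightarrow> f xs"
        by (rule isCont_tendsto_compose[OF _ xs]) (use fc[of UNIV] in \<open>simp add: continuous_on_eq_continuous_at\<close>)
      moreover have "(\<lambda>n. p (tn n)) \<longlonglongrightarrow> p \<tau>"
      proof -
        have "continuous (at \<tau> within {0..1}) p"
          by (rule continuous_on_imp_continuous_within[OF cp]) (use t0 in auto)
        moreover have "\<forall>\<^sub>F n in sequentially. tn n \<in> {0..1}"
        proof (rule always_eventually, rule allI)
          fix n show "tn n \<in> {0..1}" using tn(1)[rule_format, of n] t0 by simp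
        qed
        ultimately show ?thesis using tn(2) by (rule continuous_within_tendsto_compose)
      qed
      moreover have "(\<lambda>n. f (Q (tn n))) = (\<lambda>n. p (tn n))" using Qf tn(1) by auto
      ultimately have fxs: "f xs = p \<tau>" by (metis LIMSEQ_unique)
      obtain e V g where eV: "e > 0" "open V" "xs \<in> V" "homeomorphism V (f ` V) f g" "open (f ` V)"
        "\<forall>t\<in>{0..1}. \<bar>t - \<tau>\<bar> < e \<longrightarrow> p t \<in> f ` V"
        using loc[of xs \<tau>] fxs t0 by auto
      have gc: "continuous_on (f ` V) g" using eV(4) homeomorphism_cont2 by blast
      have gf: "\<And>y. y \<in> f ` V \<Longrightarrow> f (g y) = y" "\<And>z. z \<in> V \<Longrightarrow> g (f z) = z"
        using homeomorphism_apply2[OF eV(4)] homeomorphism_apply1[OF eV(4)] by auto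
      have "\<forall>\<^sub>F n in sequentially. Q (tn n) \<in> V"
        using xs eV(2,3) by (simp add: topological_tendstoD)
      moreover have "\<forall>\<^sub>F n in sequentially. tn n > \<tau> - e"
        using tn(2) eV(1) by (simp add: order_tendstoD(1))
      ultimately have "\<forall>\<^sub>F n in sequentially. Q (tn n) \<in> V \<and> tn n > \<tau> - e"
        by (rule eventually_conj)
      then obtain n where n: "Q (tn n) \<in> V" "tn n > \<tau> - e"
        unfolding eventually_sequentially by blast
      define t1 where "t1 = tn n"
      have t1: "0 \<le> t1" "t1 < \<tau>" "Q t1 \<in> V" "t1 > \<tau> - e" using n tn(1) unfolding t1_def by auto
      have "s \<in> S" if s: "0 \<le> s" "s \<le> 1" "s < \<tau> + e" for s
      proof (cases "s < \<tau>")
        case True then show ?thesis using IH s by auto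
      next
        case False
        define q' where "q' t = (if t \<le> t1 then Q t else g (p t))" for t
        have pin: "p t \<in> f ` V" if "t \<in> {t1..s}" for t using eV(6) that s t1 by auto
        have "L s q'" unfolding L_def
        proof (intro conjI ballI)
          have c1: "continuous_on {t \<in> {0..s}. t \<le> t1} Q"
            by (rule continuous_on_subset[OF Qcont]) (use t1 in auto)
          have "continuous_on {t1..s} p" by (rule continuous_on_subset[OF cp]) (use s t1 in auto)
          then have "continuous_on {t1..s} (\<lambda>t. g (p t))"
            by (rule continuous_on_compose2[OF gc]) (use pin in blast)
          then have c2: "continuous_on {t \<in> {0..s}. t1 \<le> t} (\<lambda>t. g (p t))"
            by (rule continuous_on_subset) auto
          have eqq: "Q t1 = g (p t1)" using gf(2)[OF t1(3)] Qf t1 by auto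
          show "continuous_on {0..s} q'" unfolding q'_def
            by (rule continuous_on_cases_le[OF c1 c2]) (auto simp: eqq continuous_on_id)
          show "f (q' t) = p t" if "t \<in> {0..s}" for t
            using that Qf t1 gf(1)[OF pin] unfolding q'_def by auto
          show "q' 0 = x" using Q0 t1 unfolding q'_def by auto
        qed
        then show ?thesis using s unfolding S_def by auto
      qed
      then show ?thesis using eV(1) by blast
    qed
  qed
  then obtain q where "L 1 q" unfolding S_def by blast
  then show ?thesis unfolding L_def by blast
qed


lemma cont_within_transform:
  assumes "continuous (at a within U) g" "a \<in> U" "0 < d"
    and "\<And>y. y \<in> U \<Longrightarrow> dist y a < d \<Longrightarrow> g y = h y"
  shows "continuous (at a within U) h"
proof -
  have ga: "g a = h a" using assms(2,3,4) by simp
  have "(g \<longlongrightarrow> g a) (at a within U)" using assms(1) unfolding continuous_within .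
  then have "(h \<longlongrightarrow> g a) (at a within U)"
    by (rule Lim_transform_within[OF _ assms(3)]) (use assms(4) in blast)
  then show ?thesis unfolding continuous_within ga .
qed

lemma cont_within_nbhd:
  fixes h :: "'a::metric_space \<Rightarrow> 'b::metric_space"
  assumes "continuous (at a within S) h" "open V" "h a \<in> V"
  shows "\<exists>d>0. \<forall>x\<in>S. dist x a < d \<longrightarrow> h x \<in> V"
proof -
  obtain e where e: "e > 0" "ball (h a) e \<subseteq> V" using assms(2,3) open_contains_ball by blast
  obtain d where d: "d > 0" "\<forall>x\<in>S. dist x a < d \<longrightarrow> dist (h x) (h a) < e"
    using assms(1) e(1) unfolding continuous_within_eps_delta by blast
  have "\<forall>x\<in>S. dist x a < d \<longrightarrow> h x \<in> V"
  proof (intro ballI impI)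
    fix x assume "x \<in> S" "dist x a < d"
    then have "dist (h x) (h a) < e" using d(2) by blast
    then have "dist (h a) (h x) < e" by (simp add: dist_commute)
    then show "h x \<in> V" using e(2) by (simp add: subset_iff)
  qed
  then show ?thesis using d(1) by blast
qed

lemma homotopy_lift_cont:
  fixes f :: "'a::metric_space \<Rightarrow> 'b::metric_space" and H :: "'b \<times> real \<Rightarrow> 'b"
    and F :: "'b \<Rightarrow> real \<Rightarrow> 'a"
  assumes lh: "local_homeomorphism f" and Hc: "continuous_on (U \<times> {0..1}) H"
    and Fc: "\<And>y. y \<in> U \<Longrightarrow> continuous_on {0..1} (F y)"
    and Ff: "\<And>y t. y \<in> U \<Longrightarrow> t \<in> {0..1} \<Longrightarrow> f (F y t) = H (y, t)"
    and F0: "\<And>y. y \<in> U \<Longrightarrow> F y 0 = x"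
  shows "continuous_on U (\<lambda>y. F y 1)"
  unfolding continuous_on_eq_continuous_within
proof
  fix y1 assume y1: "y1 \<in> U"
  define S where "S = {\<tau>. 0 \<le> \<tau> \<and> \<tau> \<le> 1 \<and> (\<forall>s\<in>{0..\<tau>}. continuous (at y1 within U) (\<lambda>y. F y s))}"
  have S0: "0 \<in> S"
  proof -
    have "continuous (at y1 within U) (\<lambda>y. F y 0)"
      by (rule cont_within_transform[of y1 U "\<lambda>y. x" 1]) (use y1 F0 in auto)
    then show ?thesis unfolding S_def by simp
  qed
  have "1 \<in> S"
  proof (rule real_induct01)
    show "0 \<in> S" by (rule S0)
    show "s \<in> S" if tS: "t \<in> S" and "0 \<le> s" "s \<le> t" for t s
      using tS that(2,3) unfolding S_def by auto
    show "S \<subseteq> {0..1}" unfolding S_def by auto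
    fix \<tau> :: real
    assume t0: "0 \<le> \<tau>" "\<tau> \<le> 1" and IH: "\<And>s. 0 \<le> s \<Longrightarrow> s < \<tau> \<Longrightarrow> s \<in> S"
    define xs where "xs = F y1 \<tau>"
    obtain V g where V: "open V" "xs \<in> V" "open (f ` V)" "homeomorphism V (f ` V) f g"
      using lh_open_inj[OF lh] by blast
    have gc: "continuous_on (f ` V) g" using V(4) homeomorphism_cont2 by blast
    have "continuous (at \<tau> within {0..1}) (F y1)"
      by (rule continuous_on_imp_continuous_within[OF Fc[OF y1]]) (use t0 in auto)
    then obtain e1 where e1: "e1 > 0" "\<forall>t\<in>{0..1}. dist t \<tau> < e1 \<longrightarrow> F y1 t \<in> V"
      using cont_within_nbhd[OF _ V(1)] V(2) unfolding xs_def by blast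
    have yt: "(y1, \<tau>) \<in> U \<times> {0..1}" using y1 t0 by auto
    have "continuous (at (y1, \<tau>) within U \<times> {0..1}) H"
      by (rule continuous_on_imp_continuous_within[OF Hc _ yt]) simp
    moreover have "H (y1, \<tau>) \<in> f ` V" using Ff[OF y1, of \<tau>] t0 V(2) unfolding xs_def by (metis atLeastAtMost_iff imageI)
    ultimately obtain d where d: "d > 0" "\<forall>z\<in>U \<times> {0..1}. dist z (y1, \<tau>) < d \<longrightarrow> H z \<in> f ` V"
      using cont_within_nbhd[OF _ V(3)] by blast
    define e where "e = min e1 (d/2)"
    have e: "e > 0" "e \<le> e1" "e \<le> d/2" using e1 d unfolding e_def by auto
    define t1 where "t1 = max 0 (\<tau> - e/2)"
    have t1: "0 \<le> t1" "t1 \<le> \<tau>" "\<tau> - e/2 \<le> t1" "t1 \<le> 1" using t0 e unfolding t1_def by auto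
    have t1S: "t1 \<in> S"
    proof (cases "\<tau> = 0")
      case True then show ?thesis using S0 t1 by simp
    next
      case False then show ?thesis using IH t1 t0 e unfolding t1_def by auto
    qed
    have "dist t1 \<tau> < e1" using t1 e by (simp add: dist_real_def)
    then have Ft1: "F y1 t1 \<in> V" using e1(2) t1 by auto
    have "continuous (at y1 within U) (\<lambda>y. F y t1)" using t1S t1 unfolding S_def by auto
    then obtain d2 where d2: "d2 > 0" "\<forall>y\<in>U. dist y y1 < d2 \<longrightarrow> F y t1 \<in> V"
      using cont_within_nbhd[OF _ V(1)] Ft1 by blast
    define r where "r = min d2 (d/2)"
    have r: "r > 0" "r \<le> d2" "r \<le> d/2" using d2 d unfolding r_def by auto
    have inW: "H (y, t) \<in> f ` V"
      if "y \<in> U" "dist y y1 < d/2" "t \<in> {0..1}" "\<bar>t - \<tau>\<bar> < d/2" for y t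
    proof -
      have "dist (y, t) (y1, \<tau>) \<le> dist y y1 + dist t \<tau>"
        unfolding dist_Pair_Pair by (rule sqrt_sum_squares_le_sum) auto
      also have "\<dots> < d" using that by (simp add: dist_real_def)
      finally show ?thesis using d(2) that by auto
    qed
    have key: "F y s = g (H (y, s))"
      if s: "0 \<le> s" "s \<le> 1" "s < \<tau> + e" "t1 \<le> s" and y: "y \<in> U" "dist y y1 < r" for s y
    proof -
      have inW': "H (y, t) \<in> f ` V" if "t \<in> {t1..s}" for t
        using inW[OF y(1), of t] that r y(2) s t1 e by (auto simp: abs_if)
      have cH: "continuous_on {t1..s} (\<lambda>t. H (y, t))"
      proof (rule continuous_on_compose2[OF Hc])
        show "continuous_on {t1..s} (\<lambda>t. (y, t))" by (intro continuous_intros)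
        show "(\<lambda>t. (y, t)) ` {t1..s} \<subseteq> U \<times> {0..1}" using y(1) s t1 by auto
      qed
      have c2: "continuous_on {t1..s} (\<lambda>t. g (H (y, t)))"
        by (rule continuous_on_compose2[OF gc cH]) (use inW' in blast)
      have c1: "continuous_on {t1..s} (F y)"
        by (rule continuous_on_subset[OF Fc[OF y(1)]]) (use s t1 in auto)
      have Fy1: "F y t1 \<in> V" using d2(2) y r by auto
      show ?thesis
      proof (rule lift_unique[OF lh connected_Icc c1 c2])
        fix t assume t: "t \<in> {t1..s}"
        have "f (F y t) = H (y, t)" using Ff[OF y(1), of t] t s t1 by auto
        also have "\<dots> = f (g (H (y, t)))" using homeomorphism_apply2[OF V(4) inW'[OF t]] by (rule sym)
        finally show "f (F y t) = f (g (H (y, t)))" .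
      next
        show "t1 \<in> {t1..s}" using s by auto
        have "F y t1 = g (f (F y t1))" using homeomorphism_apply1[OF V(4) Fy1] by (rule sym)
        also have "f (F y t1) = H (y, t1)" using Ff[OF y(1), of t1] t1 by auto
        finally show "F y t1 = g (H (y, t1))" .
      next
        show "s \<in> {t1..s}" using s by auto
      qed
    qed
    have contS: "continuous (at y1 within U) (\<lambda>y. F y s)"
      if s: "0 \<le> s" "s \<le> 1" "s < \<tau> + e" "t1 \<le> s" for s
    proof -
      have inW2: "H (y, s) \<in> f ` V" if "y \<in> U \<inter> ball y1 r" for y
        using inW[of y s] that r s t1 e by (auto simp: abs_if dist_commute)
      have cH: "continuous_on (U \<inter> ball y1 r) (\<lambda>y. H (y, s))"
      proof (rule continuous_on_compose2[OF Hc])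
        show "continuous_on (U \<inter> ball y1 r) (\<lambda>y. (y, s))" by (intro continuous_intros)
        show "(\<lambda>y. (y, s)) ` (U \<inter> ball y1 r) \<subseteq> U \<times> {0..1}" using s by auto
      qed
      have "continuous_on (U \<inter> ball y1 r) (\<lambda>y. g (H (y, s)))"
        by (rule continuous_on_compose2[OF gc cH]) (use inW2 in blast)
      then have "continuous (at y1 within U \<inter> ball y1 r) (\<lambda>y. g (H (y, s)))"
        by (rule continuous_on_imp_continuous_within) (use y1 r in auto)
      then have "((\<lambda>y. g (H (y, s))) \<longlongrightarrow> g (H (y1, s))) (at y1 within U \<inter> ball y1 r)"
        unfolding continuous_within .
      moreover have "\<forall>\<^sub>F y in at y1. (y \<in> U \<inter> ball y1 r) = (y \<in> U)"
        unfolding eventually_at by (rule exI[of _ r]) (use r in \<open>auto simp: dist_commute\<close>)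
      ultimately have "((\<lambda>y. g (H (y, s))) \<longlongrightarrow> g (H (y1, s))) (at y1 within U)"
        by (rule Lim_transform_within_set)
      then have "continuous (at y1 within U) (\<lambda>y. g (H (y, s)))"
        unfolding continuous_within .
      then show ?thesis
        by (rule cont_within_transform[OF _ y1 r(1)]) (use key[OF s] in auto)
    qed
    show "\<exists>e>0. \<forall>s. 0 \<le> s \<and> s \<le> 1 \<and> s < \<tau> + e \<longrightarrow> s \<in> S"
    proof (intro exI[of _ e] conjI allI impI)
      show "e > 0" by (rule e(1))
      fix s assume s: "0 \<le> s \<and> s \<le> 1 \<and> s < \<tau> + e"
      have "continuous (at y1 within U) (\<lambda>y. F y s')" if "s' \<in> {0..s}" for s'
      proof (cases "s' \<le> t1")
        case True then show ?thesis using t1S that unfolding S_def by auto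
      next
        case False then show ?thesis using contS[of s'] that s by auto
      qed
      then show "s \<in> S" unfolding S_def using s by auto
    qed
  qed
  then show "continuous (at y1 within U) (\<lambda>y. F y 1)" unfolding S_def by auto
qed


theorem theorem1:
  fixes f :: "'a::metric_space \<Rightarrow> 'b::metric_space"
    and P :: "(real \<Rightarrow> 'b) set"
  assumes "local_homeomorphism f"
    and "\<forall>p\<in>P. path p"
    and "P_connected P"
    and "locally_P_contractible P"
  shows "covering_space UNIV f UNIV \<longleftrightarrow> (\<forall>p\<in>P. continuation_property f p)"
proof
  note lh = assms(1)
  assume cov: "covering_space UNIV f UNIV"
  show "\<forall>p\<in>P. continuation_property f p"
  proof
    fix p assume pP: "p \<in> P"
    then have pc: "continuous_on {0..1} p" using assms(2) unfolding path_def by blast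
    show "continuation_property f p" unfolding continuation_property_def
    proof (intro ballI allI impI)
      fix b :: real and q :: "real \<Rightarrow> 'a"
      assume b: "b \<in> {0<..1}" and qh: "continuous_on {0..<b} q \<and> (\<forall>t\<in>{0..<b}. f (q t) = p t)"
      have "\<exists>T. p b \<in> T \<and> openin (top_of_set UNIV) T \<and>
                    (\<exists>v. \<Union>v = UNIV \<inter> f -` T \<and>
                        (\<forall>u \<in> v. openin (top_of_set UNIV) u) \<and>
                        pairwise disjnt v \<and>
                        (\<forall>u \<in> v. \<exists>q. homeomorphism u T f q))"
        by (rule bspec[OF cov[unfolded covering_space_def, THEN conjunct2, THEN conjunct2] UNIV_I])
      then obtain T v where T: "p b \<in> T" "openin (top_of_set UNIV) T"
        and v: "\<Union>v = UNIV \<inter> f -` T" "\<forall>u \<in> v. openin (top_of_set UNIV) u"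
          "pairwise disjnt v" "\<forall>u \<in> v. \<exists>q. homeomorphism u T f q"
        by (elim exE conjE) (rule that; assumption)
      have Topen: "open T" using T(2) by simp
      have vopen: "\<And>u. u \<in> v \<Longrightarrow> open u" using v(2) by simp
      have "continuous (at b within {0..1}) p"
        by (rule continuous_on_imp_continuous_within[OF pc]) (use b in auto)
      then obtain \<delta> where \<delta>: "\<delta> > 0" "\<forall>t\<in>{0..1}. dist t b < \<delta> \<longrightarrow> p t \<in> T"
        using cont_within_nbhd[of b "{0..1}" p T] Topen T(1) by blast
      define a where "a = max 0 (b - \<delta>/2)"
      have a: "0 \<le> a" "a < b" "b - \<delta>/2 \<le> a" using b \<delta> unfolding a_def by auto
      have qJ: "q ` {a..<b} \<subseteq> \<Union>v"
      proof
        fix z assume "z \<in> q ` {a..<b}"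
        then obtain t where t: "t \<in> {a..<b}" "z = q t" by blast
        have "f (q t) = p t" using qh t a by auto
        moreover have "p t \<in> T" using \<delta>(2) t a b by (auto simp: dist_real_def)
        ultimately show "z \<in> \<Union>v" using v(1) t by simp
      qed
      have cJ: "connected (q ` {a..<b})"
        by (rule connected_continuous_image[OF continuous_on_subset[OF conjunct1[OF qh]] connected_Ico])
          (use a in auto)
      have neJ: "q ` {a..<b} \<noteq> {}" using a by auto
      obtain u where u: "u \<in> v" "q ` {a..<b} \<subseteq> u"
      proof (rule connected_disjoint_Union_open_pick[of v "{q ` {a..<b}}" "q ` {a..<b}"])
        show "disjoint v" using v(3) .
        show "\<And>S. S \<in> {q ` {a..<b}} \<Longrightarrow> connected S \<and> S \<noteq> {}" using cJ neJ by blast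
        show "\<And>S. S \<in> v \<Longrightarrow> open S" by (rule vopen)
        show "\<Union>{q ` {a..<b}} \<subseteq> \<Union>v" using qJ by simp
        show "q ` {a..<b} \<in> {q ` {a..<b}}" by simp
      qed (use that in blast)
      obtain g0 where g0: "homeomorphism u T f g0" using v(4) u(1) by blast
      have qg: "q t = g0 (p t)" if "t \<in> {a..<b}" for t
      proof -
        have "q t \<in> u" using u(2) that by blast
        then have "q t = g0 (f (q t))" using homeomorphism_apply1[OF g0] by simp
        also have "f (q t) = p t" using qh that a by auto
        finally show ?thesis .
      qed
      define tn where "tn n = b - (b - a) * inverse (real (Suc n))" for n
      have tn_in: "tn n \<in> {a..<b}" for n
      proof -
        have "0 < inverse (real (Suc n))" by simp
        moreover have "inverse (real (Suc n)) \<le> 1" by (simp add: field_simps)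
        ultimately have "0 < inverse (real (Suc n))" "inverse (real (Suc n)) \<le> 1" by auto
        then have "(b - a) * inverse (real (Suc n)) \<le> b - a" "0 < (b - a) * inverse (real (Suc n))"
          using a by (auto simp: mult_le_cancel_left1)
        then show ?thesis unfolding tn_def by auto
      qed
      have tn_lim: "tn \<longlonglongrightarrow> b"
      proof -
        have "(\<lambda>n. b - (b - a) * inverse (real (Suc n))) \<longlonglongrightarrow> b - (b - a) * 0"
          by (intro tendsto_intros LIMSEQ_inverse_real_of_nat)
        then show ?thesis unfolding tn_def by simp
      qed
      have "(\<lambda>n. p (tn n)) \<longlonglongrightarrow> p b"
      proof (rule continuous_within_tendsto_compose[OF \<open>continuous (at b within {0..1}) p\<close> _ tn_lim])
        show "\<forall>\<^sub>F n in sequentially. tn n \<in> {0..1}"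
        proof (rule always_eventually, rule allI)
          fix n show "tn n \<in> {0..1}" using tn_in[of n] a b by auto
        qed
      qed
      moreover have "isCont g0 (p b)"
        using homeomorphism_cont2[OF g0] Topen T(1) continuous_on_eq_continuous_at by blast
      ultimately have "(\<lambda>n. g0 (p (tn n))) \<longlonglongrightarrow> g0 (p b)"
        using isCont_tendsto_compose by blast
      moreover have "(\<lambda>n. g0 (p (tn n))) = (\<lambda>n. q (tn n))" using qg tn_in by auto
      ultimately have "convergent (\<lambda>n. q (tn n))" unfolding convergent_def by auto
      moreover have "\<forall>n. tn n \<in> {0..<b}"
      proof
        fix n
        have "a \<le> tn n" "tn n < b" using tn_in[of n] by auto
        then show "tn n \<in> {0..<b}" using a(1) by simp
      qed
      ultimately show "\<exists>tn. (\<forall>n. tn n \<in> {0..<b}) \<and> tn \<longlonglongrightarrow> b \<and> convergent (\<lambda>n. q (tn n))"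
        using tn_lim by blast
    qed
  qed
next
  note lh = assms(1)
  assume CP: "\<forall>p\<in>P. continuation_property f p"
  have fam_cp: "continuation_property f p" if fam: "in_family P p" for p
  proof -
    obtain p' where p': "p' \<in> P" "\<forall>t\<in>{0..1}. p' t = p t" using fam unfolding in_family_def by blast
    have c': "continuation_property f p'" using CP p'(1) by blast
    show ?thesis unfolding continuation_property_def
    proof (intro ballI allI impI)
      fix b :: real and q :: "real \<Rightarrow> 'a"
      assume b: "b \<in> {0<..1}" and qh: "continuous_on {0..<b} q \<and> (\<forall>t\<in>{0..<b}. f (q t) = p t)"
      have "continuous_on {0..<b} q \<and> (\<forall>t\<in>{0..<b}. f (q t) = p' t)"
        using qh p'(2) b by auto
      then show "\<exists>tn. (\<forall>n. tn n \<in> {0..<b}) \<and> tn \<longlonglongrightarrow> b \<and> convergent (\<lambda>n. q (tn n))"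
        using c'[unfolded continuation_property_def, rule_format, OF b] by blast
    qed
  qed
  have fam_path: "continuous_on {0..1} p" if fam: "in_family P p" for p
  proof -
    obtain p' where p': "p' \<in> P" "\<forall>t\<in>{0..1}. p' t = p t" using fam unfolding in_family_def by blast
    have "continuous_on {0..1} p'" using assms(2) p'(1) unfolding path_def by blast
    then show ?thesis by (rule continuous_on_eq) (use p'(2) in auto)
  qed
  define Lft where "Lft p x q \<longleftrightarrow> continuous_on {0..1} q \<and> (\<forall>t\<in>{0..1}. f (q t) = p t) \<and> q 0 = x"
    for p x and q :: "real \<Rightarrow> 'a"
  have lift_ex: "\<exists>q. Lft p x q" if "in_family P p" "f x = p 0" for p x
    unfolding Lft_def by (rule path_lift[OF lh fam_path[OF that(1)] fam_cp[OF that(1)] that(2)])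
  have fcont: "continuous_on A f" for A using lh_cont[OF lh] .
  show "covering_space UNIV f UNIV"
  proof (rule covering_spaceI)
    show "continuous_on UNIV f" by (rule fcont)
    show "f ` UNIV = UNIV"
    proof (intro set_eqI iffI)
      fix y :: 'b assume "y \<in> UNIV"
      define x0 :: 'a where "x0 = undefined"
      obtain p where p: "p \<in> P" "pathstart p = f x0" "pathfinish p = y"
        using assms(3) unfolding P_connected_def by blast
      have "in_family P p" unfolding in_family_def using p(1) by blast
      moreover have "f x0 = p 0" using p(2) unfolding pathstart_def by simp
      ultimately obtain q where q: "Lft p x0 q" using lift_ex by blast
      then have "f (q 1) = p 1" unfolding Lft_def by auto
      then have "f (q 1) = y" using p(3) unfolding pathfinish_def by simp
      then show "y \<in> f ` UNIV" using rangeI[of f "q 1"] by simp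
    next
      fix y :: 'b show "y \<in> UNIV" by (rule UNIV_I)
    qed
    fix y0 :: 'b assume "y0 \<in> UNIV"
    have "\<exists>U H. open U \<and> y0 \<in> U \<and>
        continuous_on (U \<times> {0..1}) H \<and> H ` (U \<times> {0..1}) \<subseteq> U \<and>
        (\<forall>t\<in>{0..1}. H (y0, t) = y0) \<and>
        (\<forall>y\<in>U. H (y, 0) = y0 \<and> H (y, 1) = y) \<and>
        (\<forall>y\<in>U. in_family P (\<lambda>t. H (y, t)))"
      using assms(4) unfolding locally_P_contractible_def by (rule spec)
    then obtain U H where U: "open U" "y0 \<in> U" and Hc: "continuous_on (U \<times> {0..1}) H"
      and Himg: "H ` (U \<times> {0..1}) \<subseteq> U"
      and H0: "\<forall>t\<in>{0..1}. H (y0, t) = y0"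
      and Hends: "\<forall>y\<in>U. H (y, 0) = y0 \<and> H (y, 1) = y"
      and Hfam: "\<forall>y\<in>U. in_family P (\<lambda>t. H (y, t))"
      by (elim exE conjE) (rule that; assumption)
    define F where "F x y = (SOME q. Lft (\<lambda>t. H (y, t)) x q)" for x y
    have FL: "Lft (\<lambda>t. H (y, t)) x (F x y)" if "f x = y0" "y \<in> U" for x y
    proof -
      have "\<exists>q. Lft (\<lambda>t. H (y, t)) x q"
        using lift_ex[OF Hfam[rule_format, OF that(2)]] that Hends by simp
      then show ?thesis unfolding F_def by (rule someI_ex)
    qed
    define s where "s x y = F x y 1" for x y
    have s_cont: "continuous_on U (s x)" if "f x = y0" for x
      unfolding s_def
    proof (rule homotopy_lift_cont[OF lh Hc])
      show "\<And>y. y \<in> U \<Longrightarrow> continuous_on {0..1} (F x y)" using FL that unfolding Lft_def by blast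
      show "\<And>y t. y \<in> U \<Longrightarrow> t \<in> {0..1} \<Longrightarrow> f (F x y t) = H (y, t)" using FL that unfolding Lft_def by blast
      show "\<And>y. y \<in> U \<Longrightarrow> F x y 0 = x" using FL that unfolding Lft_def by blast
    qed
    have s_f: "f (s x y) = y" if "f x = y0" "y \<in> U" for x y
    proof -
      have "f (F x y 1) = H (y, 1)" using FL[OF that] unfolding Lft_def by auto
      then show ?thesis unfolding s_def using Hends that(2) by simp
    qed
    have s_open: "open (s x ` U)" if fx: "f x = y0" for x
      unfolding open_subopen[of "s x ` U"]
    proof
      fix z assume "z \<in> s x ` U"
      then obtain y where y: "y \<in> U" "z = s x y" by blast
      obtain V g where V: "open V" "z \<in> V" "open (f ` V)" "homeomorphism V (f ` V) f g"
        using lh_open_inj[OF lh] by blast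
      define N where "N = (U \<inter> s x -` V) \<inter> f ` V"
      have Nopen: "open N" unfolding N_def
        using continuous_open_preimage[OF s_cont[OF fx] U(1) V(1)] V(3) by blast
      define W where "W = V \<inter> f -` N"
      have Wopen: "open W" unfolding W_def by (rule continuous_open_preimage[OF fcont V(1) Nopen])
      have "z \<in> W"
      proof -
        have "f z = y" using s_f[OF fx y(1)] y(2) by simp
        moreover have "y \<in> f ` V" using V(2) \<open>f z = y\<close> by (metis imageI)
        moreover have "y \<in> N" unfolding N_def using y V(2) \<open>y \<in> f ` V\<close> by auto
        ultimately show ?thesis unfolding W_def using V(2) by auto
      qed
      moreover have "W \<subseteq> s x ` U"
      proof
        fix w assume w: "w \<in> W"
        then have wV: "w \<in> V" and fwN: "f w \<in> N" unfolding W_def by auto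
        then have fwU: "f w \<in> U" and sV: "s x (f w) \<in> V" unfolding N_def by auto
        have "s x (f w) = g (f (s x (f w)))" using homeomorphism_apply1[OF V(4) sV] by (rule sym)
        also have "f (s x (f w)) = f w" by (rule s_f[OF fx fwU])
        also have "g (f w) = w" by (rule homeomorphism_apply1[OF V(4) wV])
        finally show "w \<in> s x ` U" using fwU by (metis imageI)
      qed
      ultimately show "\<exists>T. open T \<and> z \<in> T \<and> T \<subseteq> s x ` U" using Wopen by blast
    qed
    have rev_fam: "in_family P (reversepath p)" if fam: "in_family P p" for p
    proof -
      obtain p' where p': "p' \<in> P" "\<forall>t\<in>{0..1}. p' t = p t" using fam unfolding in_family_def by blast
      have "in_family P (reversepath p')" using assms(3) p'(1) unfolding P_connected_def by blast
      then obtain p'' where p'': "p'' \<in> P" "\<forall>t\<in>{0..1}. p'' t = reversepath p' t"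
        unfolding in_family_def by blast
      have "\<forall>t\<in>{0..1}. p'' t = reversepath p t"
        using p''(2) p'(2) unfolding reversepath_def by auto
      then show ?thesis unfolding in_family_def using p''(1) by blast
    qed
    show "\<exists>T. y0 \<in> T \<and> openin (top_of_set UNIV) T \<and>
             (\<exists>v. \<Union>v = UNIV \<inter> f -` T \<and> (\<forall>u \<in> v. openin (top_of_set UNIV) u) \<and>
             pairwise disjnt v \<and> (\<forall>u \<in> v. \<exists>q. homeomorphism u T f q))"
    proof (intro exI conjI)
      show "y0 \<in> U" by (rule U(2))
      show "openin (top_of_set UNIV) U" using U(1) by simp
      let ?v = "(\<lambda>x. s x ` U) ` (f -` {y0})"
      show "\<Union>?v = UNIV \<inter> f -` U"
      proof (intro set_eqI iffI)
        fix z assume "z \<in> \<Union>?v"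
        then obtain x y where "f x = y0" "y \<in> U" "z = s x y" by blast
        then show "z \<in> UNIV \<inter> f -` U" using s_f by simp
      next
        fix z assume "z \<in> UNIV \<inter> f -` U"
        then have yU: "f z \<in> U" by simp
        define y where "y = f z"
        have yU': "y \<in> U" using yU unfolding y_def .
        define hp where "hp = (\<lambda>t. H (y, t))"
        have hpfam: "in_family P hp" unfolding hp_def using Hfam yU' by blast
        have "in_family P (reversepath hp)" by (rule rev_fam[OF hpfam])
        moreover have "f z = reversepath hp 0"
          unfolding reversepath_def hp_def y_def using Hends yU by simp
        ultimately obtain r where r: "Lft (reversepath hp) z r" using lift_ex by blast
        define x where "x = r 1"
        have rc: "continuous_on {0..1} r" and rf: "\<forall>t\<in>{0..1}. f (r t) = reversepath hp t"
          and r0: "r 0 = z"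
          using r unfolding Lft_def by auto
        have fx: "f x = y0" using rf Hends yU' unfolding x_def reversepath_def hp_def by simp
        have Fx: "Lft hp x (F x y)" using FL[OF fx yU'] unfolding hp_def .
        have rrc: "continuous_on {0..1} (reversepath r)"
        proof -
          have "path r" unfolding path_def by (rule rc)
          then have "path (reversepath r)" by simp
          then show ?thesis unfolding path_def .
        qed
        have "F x y 1 = reversepath r 1"
        proof (rule lift_unique[OF lh connected_Icc _ rrc])
          show "continuous_on {0..1} (F x y)" using Fx unfolding Lft_def by blast
          fix t :: real assume t: "t \<in> {0..1}"
          have "f (F x y t) = hp t" using Fx t unfolding Lft_def by blast
          moreover have "f (reversepath r t) = hp t"
            using rf[rule_format, of "1 - t"] t unfolding reversepath_def by auto
          ultimately show "f (F x y t) = f (reversepath r t)" by simp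
        next
          show "(0::real) \<in> {0..1}" by simp
          show "F x y 0 = reversepath r 0" using Fx unfolding Lft_def reversepath_def x_def by simp
        next
          show "(1::real) \<in> {0..1}" by simp
        qed
        then have "s x y = z" unfolding s_def reversepath_def using r0 by simp
        then show "z \<in> \<Union>?v" using fx yU' by blast
      qed
      show "\<forall>u\<in>?v. openin (top_of_set UNIV) u" using s_open by auto
      show "pairwise disjnt ?v"
        unfolding pairwise_def disjnt_def
      proof (intro ballI impI)
        fix u1 u2 assume u1: "u1 \<in> ?v" and u2: "u2 \<in> ?v" and ne: "u1 \<noteq> u2"
        obtain x1 where x1: "f x1 = y0" "u1 = s x1 ` U" using u1 by blast
        obtain x2 where x2: "f x2 = y0" "u2 = s x2 ` U" using u2 by blast
        show "u1 \<inter> u2 = {}"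
        proof (rule ccontr)
          assume "u1 \<inter> u2 \<noteq> {}"
          then obtain z y1 y2 where z: "y1 \<in> U" "y2 \<in> U" "z = s x1 y1" "z = s x2 y2"
            using x1 x2 by blast
          have "y1 = y2" using s_f[OF x1(1) z(1)] s_f[OF x2(1) z(2)] z(3,4) by simp
          have L1: "Lft (\<lambda>t. H (y1, t)) x1 (F x1 y1)" by (rule FL[OF x1(1) z(1)])
          have L2: "Lft (\<lambda>t. H (y1, t)) x2 (F x2 y1)" using FL[OF x2(1) z(2)] \<open>y1 = y2\<close> by simp
          have "F x1 y1 0 = F x2 y1 0"
          proof (rule lift_unique[OF lh connected_Icc])
            show "continuous_on {0..1} (F x1 y1)" using L1 unfolding Lft_def by blast
            show "continuous_on {0..1} (F x2 y1)" using L2 unfolding Lft_def by blast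
            fix t :: real assume t: "t \<in> {0..1}"
            show "f (F x1 y1 t) = f (F x2 y1 t)" using L1 L2 t unfolding Lft_def by simp
          next
            show "(1::real) \<in> {0..1}" by simp
            show "F x1 y1 1 = F x2 y1 1" using z \<open>y1 = y2\<close> unfolding s_def by simp
          next
            show "(0::real) \<in> {0..1}" by simp
          qed
          then have "x1 = x2" using L1 L2 unfolding Lft_def by simp
          then show False using ne x1 x2 by simp
        qed
      qed
      show "\<forall>u\<in>?v. \<exists>q. homeomorphism u U f q"
      proof
        fix u assume "u \<in> ?v"
        then obtain x where fx: "f x = y0" and u: "u = s x ` U" by blast
        have "homeomorphism (s x ` U) U f (s x)"
          unfolding homeomorphism_def
        proof (intro conjI ballI)
          fix a assume "a \<in> s x ` U"
          then obtain y where "y \<in> U" "a = s x y" by blast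
          then show "s x (f a) = a" using s_f[OF fx] by simp
        next
          show "f ` s x ` U = U"
          proof (intro set_eqI iffI)
            fix y assume "y \<in> f ` s x ` U" then show "y \<in> U" using s_f[OF fx] by auto
          next
            fix y assume y: "y \<in> U"
            then have "f (s x y) = y" by (rule s_f[OF fx])
            then show "y \<in> f ` s x ` U" using y by (metis imageI)
          qed
        next
          show "continuous_on (s x ` U) f" by (rule fcont)
        next
          fix y assume "y \<in> U" then show "f (s x y) = y" by (rule s_f[OF fx])
        next
          show "s x ` U = s x ` U" ..
        next
          show "continuous_on U (s x)" by (rule s_cont[OF fx])
        qed
        then show "\<exists>q. homeomorphism u U f q" unfolding u by blast
      qed
    qed
  qed
qed

end
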